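(* Let $G=(V,E)$ be a graph and $\mathcal{C}$ a 2-coloring of $G$ with red degree sequence $d$. Then \[\dim\mathcal{A}(G,\mathcal{C})=\#E_d-\#V+b(V,E_d),\] where $b(V,E_d)$ denotes the number of bipartite connected components of the graph $(V,E_d)$.
   Context: Graphs are finite, undirected, may have parallel edges but no loops. A 2-coloring is $\mathcal{C}:E\to\{R,B\}$; its red degree sequence is $d=(d(v):v\in V)$ where $d(v)$ is the number of red edges at $v$. $\mathcal{K}(d)$ is the set of all 2-colorings of $G$ with red degree sequence $d$. The alternating cone $\mathcal{A}(G,\mathcal{C})\subseteq\mathbb{R}^E$ is the set of $x\ge0$ such that at each vertex the sum of $x$ over incident red edges equals the sum over incident blue edges. A closed alternating walk (CAW) is a walk $(v_0,e_1,v_1,\dots,e_m,v_m)$ with $v_0=v_m$, consecutive edges of different colors, and $\mathcal{C}(e_m)\ne\mathcal{C}(e_1)$. $E_d$ is the set of edges $e\in E$ such that some 2-coloring in $\mathcal{K}(d)$ has a CAW containing $e$ (isolated vertices count as bipartite components of $(V,E_d)$). *)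

theory Defs
  imports "HOL-Analysis.Analysis"
begin

text \<open>A (multi)graph: finite vertex set V, edge set E (a subset of a finite
type of edge names, so parallel edges are allowed), endpoint map ends;
every edge has exactly two distinct endpoints in V (no loops).
A 2-coloring is C :: 'e \<Rightarrow> bool, True = red, False = blue.\<close>

definition graph :: "'v set \<Rightarrow> 'e set \<Rightarrow> ('e \<Rightarrow> 'v set) \<Rightarrow> bool" where
  "graph V E ends \<longleftrightarrow> finite V \<and> finite E \<and>
     (\<forall>e\<in>E. card (ends e) = 2 \<and> ends e \<subseteq> V)"

definition red_degree :: "'e set \<Rightarrow> ('e \<Rightarrow> 'v set) \<Rightarrow> ('e \<Rightarrow> bool) \<Rightarrow> 'v \<Rightarrow> nat" where
  "red_degree E ends C v = card {e\<in>E. v \<in> ends e \<and> C e}"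

text \<open>Alternating cone, as a subset of R^E (embedded in real^'e, coordinates
outside E being zero).\<close>
definition alt_cone :: "'v set \<Rightarrow> 'e::finite set \<Rightarrow> ('e \<Rightarrow> 'v set) \<Rightarrow> ('e \<Rightarrow> bool) \<Rightarrow> (real^'e) set" where
  "alt_cone V E ends C = {x. (\<forall>e\<in>E. x $ e \<ge> 0) \<and> (\<forall>e. e \<notin> E \<longrightarrow> x $ e = 0) \<and>
      (\<forall>v\<in>V. (\<Sum>e\<in>{e\<in>E. v \<in> ends e \<and> C e}. x $ e) =
              (\<Sum>e\<in>{e\<in>E. v \<in> ends e \<and> \<not> C e}. x $ e))}"

text \<open>Closed alternating walk (v_0,e_1,v_1,...,e_m,v_m): vertex list vs of length m+1,
edge list es of length m (es ! i = e_{i+1}).\<close>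
definition is_CAW :: "'e set \<Rightarrow> ('e \<Rightarrow> 'v set) \<Rightarrow> ('e \<Rightarrow> bool) \<Rightarrow> 'v list \<Rightarrow> 'e list \<Rightarrow> bool" where
  "is_CAW E ends C vs es \<longleftrightarrow>
     length es \<ge> 1 \<and> length vs = length es + 1 \<and>
     (\<forall>i<length es. es ! i \<in> E \<and> ends (es ! i) = {vs ! i, vs ! (i+1)}) \<and>
     vs ! 0 = vs ! length es \<and>
     (\<forall>i. i + 1 < length es \<longrightarrow> C (es ! i) \<noteq> C (es ! (i+1))) \<and>
     C (last es) \<noteq> C (hd es)"

definition E_d :: "'v set \<Rightarrow> 'e set \<Rightarrow> ('e \<Rightarrow> 'v set) \<Rightarrow> ('v \<Rightarrow> nat) \<Rightarrow> 'e set" where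
  "E_d V E ends d = {e\<in>E. \<exists>C'. (\<forall>v\<in>V. red_degree E ends C' v = d v) \<and>
       (\<exists>vs es. is_CAW E ends C' vs es \<and> e \<in> set es)}"

definition components :: "'v set \<Rightarrow> 'e set \<Rightarrow> ('e \<Rightarrow> 'v set) \<Rightarrow> 'v set set" where
  "components V F ends = V // Restr ({(u,v). \<exists>e\<in>F. ends e = {u,v}}\<^sup>*) V"

definition bipartite_on :: "'v set \<Rightarrow> 'e set \<Rightarrow> ('e \<Rightarrow> 'v set) \<Rightarrow> bool" where
  "bipartite_on K F ends \<longleftrightarrow> (\<exists>f :: 'v \<Rightarrow> bool. \<forall>e\<in>F. ends e \<subseteq> K \<longrightarrow>
      (\<forall>u v. ends e = {u,v} \<longrightarrow> f u \<noteq> f v))"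

definition num_bip_components :: "'v set \<Rightarrow> 'e set \<Rightarrow> ('e \<Rightarrow> 'v set) \<Rightarrow> nat" where
  "num_bip_components V F ends = card {K \<in> components V F ends. bipartite_on K F ends}"

end

theory Submission
  imports Defs
begin


definition sg :: "('e \<Rightarrow> bool) \<Rightarrow> 'e \<Rightarrow> real" where
  "sg C e = (if C e then 1 else -1)"

definition bal :: "'e set \<Rightarrow> ('e \<Rightarrow> 'v set) \<Rightarrow> ('e \<Rightarrow> bool) \<Rightarrow> ('e \<Rightarrow> real) \<Rightarrow> 'v \<Rightarrow> real" where
  "bal E ends C x v = (\<Sum>e\<in>{e\<in>E. v \<in> ends e}. sg C e * x e)"

lemma bal_split:
  assumes "finite E"
  shows "bal E ends C x v = (\<Sum>e\<in>{e\<in>E. v \<in> ends e \<and> C e}. x e) - (\<Sum>e\<in>{e\<in>E. v \<in> ends e \<and> \<not> C e}. x e)"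
proof -
  have "bal E ends C x v = (\<Sum>e\<in>{e\<in>E. v \<in> ends e}. if C e then x e else - x e)"
    unfolding bal_def sg_def by (intro sum.cong) auto
  also have "\<dots> = (\<Sum>e\<in>{e\<in>E. v \<in> ends e} \<inter> {e. C e}. x e) + (\<Sum>e\<in>{e\<in>E. v \<in> ends e} \<inter> - {e. C e}. - x e)"
    by (rule sum.If_cases) (use assms in auto)
  also have "{e\<in>E. v \<in> ends e} \<inter> {e. C e} = {e\<in>E. v \<in> ends e \<and> C e}" by auto
  also have "{e\<in>E. v \<in> ends e} \<inter> - {e. C e} = {e\<in>E. v \<in> ends e \<and> \<not> C e}" by auto
  finally show ?thesis by (simp add: sum_negf)
qed

lemma sum_rot:
  fixes h :: "nat \<Rightarrow> real"
  assumes "m \<ge> 1"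
  shows "(\<Sum>i<m. h (Suc i mod m)) = (\<Sum>i<m. h i)"
proof -
  obtain k where m: "m = Suc k" using assms by (cases m) auto
  have "(\<Sum>i<m. h (Suc i mod m)) = (\<Sum>i<k. h (Suc i mod m)) + h (Suc k mod m)"
    by (simp add: m)
  also have "(\<Sum>i<k. h (Suc i mod m)) = (\<Sum>i<k. h (Suc i))"
    by (intro sum.cong) (auto simp: m)
  also have "h (Suc k mod m) = h 0" by (simp add: m)
  also have "(\<Sum>i<k. h (Suc i)) + h 0 = (\<Sum>i<m. h i)"
    by (simp only: m sum.lessThan_Suc_shift add.commute)
  finally show ?thesis .
qed

lemma caw_vec:
  assumes g: "graph V E ends" and w: "is_CAW E ends C vs es"
  defines "x \<equiv> (\<lambda>e. \<Sum>i<length es. if es ! i = e then 1 else 0 :: real)"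
  shows "(\<forall>e. x e \<ge> 0) \<and> (\<forall>e. e \<notin> E \<longrightarrow> x e = 0) \<and> (\<forall>v. bal E ends C x v = 0)
     \<and> (\<forall>e\<in>set es. x e > 0)"
proof (intro conjI allI ballI impI)
  let ?m = "length es"
  have m1: "?m \<ge> 1" and lv: "length vs = ?m + 1"
    and edg: "\<And>i. i < ?m \<Longrightarrow> es ! i \<in> E \<and> ends (es ! i) = {vs ! i, vs ! (i+1)}"
    and cl: "vs ! 0 = vs ! ?m"
    and alt: "\<And>i. i + 1 < ?m \<Longrightarrow> C (es ! i) \<noteq> C (es ! (i+1))"
    and lst: "C (last es) \<noteq> C (hd es)"
    using w unfolding is_CAW_def by auto
  have ne: "es \<noteq> []" using m1 by auto
  have dist: "vs ! i \<noteq> vs ! (i+1)" if "i < ?m" for i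
  proof
    assume "vs ! i = vs ! (i+1)"
    then have "ends (es ! i) = {vs ! i}" using edg[OF that] by auto
    moreover have "card (ends (es ! i)) = 2" using g edg[OF that] unfolding graph_def by auto
    ultimately show False by simp
  qed
  define s where "s i = sg C (es ! i)" for i
  have salt: "s i = - s (Suc i mod ?m)" if "i < ?m" for i
  proof (cases "i + 1 < ?m")
    case True
    then show ?thesis using alt[OF True] by (simp add: s_def sg_def)
  next
    case False
    then have i: "i = ?m - 1" using that by auto
    have "Suc i = ?m" using i m1 by simp
    then have "Suc i mod ?m = 0" by simp
    moreover have "last es = es ! i" using i ne by (simp add: last_conv_nth)
    moreover have "hd es = es ! 0" using ne by (simp add: hd_conv_nth)
    ultimately show ?thesis using lst by (simp add: s_def sg_def)
  qed
  fix v
  have "bal E ends C x v = (\<Sum>e\<in>{e\<in>E. v \<in> ends e}. \<Sum>i<?m. (if es ! i = e then sg C e else 0))"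
    unfolding bal_def x_def by (simp add: sum_distrib_left if_distrib cong: if_cong)
  also have "\<dots> = (\<Sum>i<?m. \<Sum>e\<in>{e\<in>E. v \<in> ends e}. (if es ! i = e then sg C e else 0))"
    by (rule sum.swap)
  also have "\<dots> = (\<Sum>i<?m. if v \<in> ends (es ! i) then s i else 0)"
  proof (intro sum.cong refl)
    fix i assume "i \<in> {..<?m}"
    then have "es ! i \<in> E" using edg by auto
    then show "(\<Sum>e\<in>{e\<in>E. v \<in> ends e}. (if es ! i = e then sg C e else 0)) = (if v \<in> ends (es ! i) then s i else 0)"
      using g unfolding graph_def s_def by (simp add: sum.delta[of _ "es ! i", simplified eq_commute])
  qed
  also have "\<dots> = (\<Sum>i<?m. (if vs ! i = v then s i else 0) + (if vs ! (i+1) = v then s i else 0))"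
  proof (intro sum.cong refl)
    fix i assume "i \<in> {..<?m}"
    then show "(if v \<in> ends (es ! i) then s i else 0) = (if vs ! i = v then s i else 0) + (if vs ! (i+1) = v then s i else 0)"
      using edg[of i] dist[of i] by auto
  qed
  also have "\<dots> = (\<Sum>i<?m. (if vs ! i = v then s i else 0)) + (\<Sum>i<?m. (if vs ! (i+1) = v then s i else 0))"
    by (rule sum.distrib)
  also have "(\<Sum>i<?m. (if vs ! (i+1) = v then s i else 0)) = (\<Sum>i<?m. - (\<lambda>j. if vs ! j = v then s j else 0) (Suc i mod ?m))"
  proof (intro sum.cong refl)
    fix i assume i: "i \<in> {..<?m}"
    have "vs ! (i+1) = vs ! (Suc i mod ?m)"
    proof (cases "Suc i < ?m")
      case True then show ?thesis by simp
    next
      case False then have "Suc i = ?m" using i by auto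
      then show ?thesis using cl by simp
    qed
    then show "(if vs ! (i+1) = v then s i else 0) = - (\<lambda>j. if vs ! j = v then s j else 0) (Suc i mod ?m)"
      using salt[of i] i by auto
  qed
  also have "\<dots> = - (\<Sum>i<?m. (\<lambda>j. if vs ! j = v then s j else 0) (Suc i mod ?m))"
    by (simp add: sum_negf)
  also have "(\<Sum>i<?m. (\<lambda>j. if vs ! j = v then s j else 0) (Suc i mod ?m)) = (\<Sum>i<?m. if vs ! i = v then s i else 0)"
    by (rule sum_rot[OF m1])
  finally show "bal E ends C x v = 0" by simp
next
  fix e show "x e \<ge> 0" unfolding x_def by (intro sum_nonneg) auto
next
  fix e assume "e \<notin> E"
  then show "x e = 0" unfolding x_def using w unfolding is_CAW_def
    by (intro sum.neutral) (auto)
next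
  fix e assume "e \<in> set es"
  then obtain j where j: "j < length es" "es ! j = e" by (auto simp: in_set_conv_nth)
  have "(\<Sum>i<length es. if es ! i = e then 1 else 0 :: real) \<ge> (\<Sum>i\<in>{j}. if es ! i = e then 1 else 0 :: real)"
    by (intro sum_mono2) (use j in auto)
  then show "x e > 0" unfolding x_def using j by simp
qed



lemma sum_of_bool_card:
  assumes "finite S"
  shows "(\<Sum>e\<in>S. (if P e then 1 else 0 :: real)) = real (card {e\<in>S. P e})"
  using sum.inter_filter[OF assms, of "\<lambda>_. (1::real)" P] by simp

lemma transfer_cone:
  assumes fin: "finite E"
    and deg: "\<forall>v\<in>V. red_degree E ends C' v = red_degree E ends C v"
    and wpos: "\<forall>e. w e \<ge> 0" and wsup: "\<forall>e. e \<notin> E \<longrightarrow> w e = 0"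
    and wbal: "\<forall>v\<in>V. bal E ends C' w v = 0" and we0: "w e0 > 0"
  shows "\<exists>a. (\<forall>e. a e \<ge> 0) \<and> (\<forall>e. e \<notin> E \<longrightarrow> a e = 0) \<and> (\<forall>v\<in>V. bal E ends C a v = 0) \<and> a e0 > 0"
proof -
  define M where "M = (\<Sum>e\<in>E. w e) + 1"
  have wle: "w e < M" for e
  proof (cases "e \<in> E")
    case True
    then have "w e \<le> (\<Sum>e\<in>E. w e)"
      using wpos by (intro member_le_sum) (auto simp: fin)
    then show ?thesis by (simp add: M_def)
  next
    case False
    have "0 \<le> (\<Sum>e\<in>E. w e)" using wpos by (intro sum_nonneg) auto
    then show ?thesis using False wsup by (simp add: M_def)
  qed
  define a where "a e = (if e \<in> E then (if C e \<noteq> C' e then M - w e else w e) else 0)" for e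
  have "\<forall>e. a e \<ge> 0" using wle wpos unfolding a_def by (auto simp: less_imp_le)
  moreover have "\<forall>e. e \<notin> E \<longrightarrow> a e = 0" unfolding a_def by auto
  moreover have "a e0 > 0"
    using we0 wle[of e0] wsup unfolding a_def by (cases "e0 \<in> E") auto
  moreover have "\<forall>v\<in>V. bal E ends C a v = 0"
  proof
    fix v assume v: "v \<in> V"
    let ?S = "{e\<in>E. v \<in> ends e}"
    have fS: "finite ?S" using fin by auto
    have "bal E ends C a v = (\<Sum>e\<in>?S. sg C' e * w e + M * ((if C e then 1 else 0) - (if C' e then 1 else 0)))"
      unfolding bal_def by (intro sum.cong refl) (auto simp: a_def sg_def algebra_simps)
    also have "\<dots> = bal E ends C' w v + M * ((\<Sum>e\<in>?S. (if C e then 1 else 0)) - (\<Sum>e\<in>?S. (if C' e then 1 else 0)))"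
      unfolding bal_def by (simp add: sum.distrib sum_distrib_left[symmetric] sum_subtractf[symmetric])
    also have "(\<Sum>e\<in>?S. (if C e then 1 else 0 :: real)) = real (red_degree E ends C v)"
      unfolding red_degree_def using sum_of_bool_card[OF fS, of C]
      by (simp add: conj_assoc)
    also have "(\<Sum>e\<in>?S. (if C' e then 1 else 0 :: real)) = real (red_degree E ends C' v)"
      unfolding red_degree_def using sum_of_bool_card[OF fS, of C']
      by (simp add: conj_assoc)
    finally show "bal E ends C a v = 0" using deg wbal v by simp
  qed
  ultimately show ?thesis by blast
qed



definition arcs :: "'e set \<Rightarrow> ('e \<Rightarrow> 'v set) \<Rightarrow> ('e \<Rightarrow> bool) \<Rightarrow> ('e \<Rightarrow> real) \<Rightarrow> (('v \<times> bool) \<times> ('v \<times> bool)) set" where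
  "arcs E ends C x = {((a, c), (b, c')). \<exists>e\<in>E. x e > 0 \<and> ends e = {a,b} \<and> C e = c \<and> c' = (\<not> c)}"

lemma path_walk:
  assumes "(s, t) \<in> (arcs E ends C x)\<^sup>*"
  shows "s = t \<or> (\<exists>vs es. length es \<ge> 1 \<and> length vs = length es + 1 \<and>
     (\<forall>i<length es. es ! i \<in> E \<and> ends (es ! i) = {vs ! i, vs ! (i+1)}) \<and>
     vs ! 0 = fst s \<and> vs ! (length es) = fst t \<and>
     (\<forall>i. i + 1 < length es \<longrightarrow> C (es ! i) \<noteq> C (es ! (i+1))) \<and>
     C (hd es) = snd s \<and> snd t = (\<not> C (last es)))"
  using assms
proof (induction rule: rtrancl_induct)
  case base
  then show ?case by simp
next
  case (step y z)
  from step.hyps(2) obtain a b e where y: "y = (a, C e)" and z: "z = (b, \<not> C e)"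
    and e: "e \<in> E" "ends e = {a,b}"
    unfolding arcs_def by auto
  from step.IH show ?case
  proof
    assume "s = y"
    then show ?thesis using y z e
      by (intro disjI2 exI[of _ "[a,b]"] exI[of _ "[e]"]) auto
  next
    assume "\<exists>vs es. length es \<ge> 1 \<and> length vs = length es + 1 \<and>
     (\<forall>i<length es. es ! i \<in> E \<and> ends (es ! i) = {vs ! i, vs ! (i+1)}) \<and>
     vs ! 0 = fst s \<and> vs ! (length es) = fst y \<and>
     (\<forall>i. i + 1 < length es \<longrightarrow> C (es ! i) \<noteq> C (es ! (i+1))) \<and>
     C (hd es) = snd s \<and> snd y = (\<not> C (last es))"
    then obtain vs es where h: "length es \<ge> 1" "length vs = length es + 1"
      "\<forall>i<length es. es ! i \<in> E \<and> ends (es ! i) = {vs ! i, vs ! (i+1)}"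
      "vs ! 0 = fst s" "vs ! (length es) = fst y"
      "\<forall>i. i + 1 < length es \<longrightarrow> C (es ! i) \<noteq> C (es ! (i+1))"
      "C (hd es) = snd s" "snd y = (\<not> C (last es))" by blast
    have ne: "es \<noteq> []" using h(1) by auto
    have lasti: "last es = es ! (length es - 1)" using ne by (simp add: last_conv_nth)
    let ?vs = "vs @ [b]" and ?es = "es @ [e]"
    have A1: "\<forall>i<length ?es. ?es ! i \<in> E \<and> ends (?es ! i) = {?vs ! i, ?vs ! (i+1)}"
    proof (intro allI impI)
      fix i assume "i < length ?es"
      then have "i < length es \<or> i = length es" by auto
      then show "?es ! i \<in> E \<and> ends (?es ! i) = {?vs ! i, ?vs ! (i+1)}"
      proof
        assume i: "i < length es"
        then show ?thesis using h(2,3) by (simp add: nth_append)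
      next
        assume i: "i = length es"
        then show ?thesis using h(2,5) y e by (simp add: nth_append)
      qed
    qed
    have A2: "\<forall>i. i + 1 < length ?es \<longrightarrow> C (?es ! i) \<noteq> C (?es ! (i+1))"
    proof (intro allI impI)
      fix i assume "i + 1 < length ?es"
      then have "i + 1 < length es \<or> i + 1 = length es" by auto
      then show "C (?es ! i) \<noteq> C (?es ! (i+1))"
      proof
        assume "i + 1 < length es" then show ?thesis using h(6) by (simp add: nth_append)
      next
        assume i: "i + 1 = length es"
        then have "i = length es - 1" by simp
        then show ?thesis using i h(8) y lasti by (simp add: nth_append)
      qed
    qed
    show ?thesis
      apply (intro disjI2 exI[of _ ?vs] exI[of _ ?es])
      using h A1 A2 ne z by (simp add: nth_append)
  qed
qed

lemma circulation_caw:
  assumes g: "graph V E ends" and xpos: "\<forall>e. x e \<ge> 0"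
    and xbal: "\<forall>v\<in>V. bal E ends C x v = 0" and e0: "e0 \<in> E" "x e0 > 0"
  shows "\<exists>vs es. is_CAW E ends C vs es \<and> e0 \<in> set es"
proof -
  let ?H = "arcs E ends C x"
  have finE: "finite E" and endsV: "\<And>e. e \<in> E \<Longrightarrow> ends e \<subseteq> V" and c2: "\<And>e. e \<in> E \<Longrightarrow> card (ends e) = 2"
    and finV: "finite V"
    using g unfolding graph_def by auto
  obtain u v where uv: "ends e0 = {u, v}" "u \<noteq> v" using c2[OF e0(1)] by (auto simp: card_2_iff)
  define c0 where "c0 = C e0"
  have reach: "((v, \<not> c0), (u, c0)) \<in> ?H\<^sup>*"
  proof (rule ccontr)
    assume nr: "((v, \<not> c0), (u, c0)) \<notin> ?H\<^sup>*"
    define T where "T = {s. ((v, \<not> c0), s) \<in> ?H\<^sup>*}"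
    have clos: "t \<in> T" if "s \<in> T" "(s, t) \<in> ?H" for s t
      using that unfolding T_def by (auto intro: rtrancl_into_rtrancl)
    define tau where "tau a e = (if (a, C e) \<in> T then 1 else 0) - (if (a, \<not> C e) \<in> T then 1 else 0 :: real)" for a e
    have vert: "(\<Sum>e\<in>{e\<in>E. a \<in> ends e}. x e * tau a e) = 0" if a: "a \<in> V" for a
    proof -
      define k where "k = (if (a, True) \<in> T then 1 else 0) - (if (a, False) \<in> T then 1 else 0 :: real)"
      have "tau a e = k * sg C e" for e
        unfolding tau_def k_def sg_def by (cases "C e") auto
      then have "(\<Sum>e\<in>{e\<in>E. a \<in> ends e}. x e * tau a e) = k * bal E ends C x a"
        unfolding bal_def by (simp add: sum_distrib_left algebra_simps)
      then show ?thesis using xbal a by simp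
    qed
    have "(\<Sum>a\<in>V. \<Sum>e\<in>{e\<in>E. a \<in> ends e}. x e * tau a e) = 0"
      using vert by simp
    then have "(\<Sum>e\<in>E. \<Sum>a\<in>{a\<in>V. a \<in> ends e}. x e * tau a e) = 0"
      using sum.swap_restrict[OF finV finE, of "\<lambda>a e. x e * tau a e" "\<lambda>a e. a \<in> ends e"] by simp
    moreover have "{a\<in>V. a \<in> ends e} = ends e" if "e \<in> E" for e using endsV[OF that] by auto
    ultimately have tot: "(\<Sum>e\<in>E. \<Sum>a\<in>ends e. x e * tau a e) = 0"
      by (metis (no_types, lifting) sum.cong)
    have edge: "(\<Sum>a\<in>ends e. x e * tau a e) \<le> 0" if e: "e \<in> E" for e
    proof (cases "x e > 0")
      case False
      then have "x e = 0" using xpos[rule_format, of e] by auto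
      then show ?thesis by simp
    next
      case True
      obtain a b where ab: "ends e = {a, b}" "a \<noteq> b" using c2[OF e] by (auto simp: card_2_iff)
      have h1: "((a, C e), (b, \<not> C e)) \<in> ?H" using ab e True unfolding arcs_def by auto
      have h2: "((b, C e), (a, \<not> C e)) \<in> ?H" using ab e True unfolding arcs_def by (auto simp: insert_commute)
      have "tau a e + tau b e \<le> 0"
        using clos[OF _ h1] clos[OF _ h2] unfolding tau_def by auto
      then have "x e * (tau a e + tau b e) \<le> 0" using True by (simp add: mult_le_0_iff)
      then show ?thesis using ab by (simp add: algebra_simps)
    qed
    have e0neg: "(\<Sum>a\<in>ends e0. x e0 * tau a e0) < 0"
    proof -
      have h2: "((v, C e0), (u, \<not> C e0)) \<in> ?H" using uv e0 unfolding arcs_def by (auto simp: insert_commute)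
      have vin: "(v, \<not> c0) \<in> T" unfolding T_def by simp
      have uout: "(u, c0) \<notin> T" using nr unfolding T_def by simp
      have "tau u e0 + tau v e0 < 0"
        using clos[OF _ h2] vin uout unfolding tau_def c0_def by auto
      then have "x e0 * (tau u e0 + tau v e0) < 0" using e0(2) by (simp add: mult_less_0_iff)
      then show ?thesis using uv by (simp add: algebra_simps)
    qed
    have "(\<Sum>e\<in>E. \<Sum>a\<in>ends e. x e * tau a e) = (\<Sum>a\<in>ends e0. x e0 * tau a e0) + (\<Sum>e\<in>E - {e0}. \<Sum>a\<in>ends e. x e * tau a e)"
      using e0(1) finE by (simp add: sum.remove)
    also have "(\<Sum>e\<in>E - {e0}. \<Sum>a\<in>ends e. x e * tau a e) \<le> 0"
      using edge by (rule sum_nonpos) blast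
    finally have "(\<Sum>e\<in>E. \<Sum>a\<in>ends e. x e * tau a e) < 0" using e0neg by linarith
    then show False using tot by simp
  qed
  have neq: "(v, \<not> c0) \<noteq> (u, c0)" by auto
  have "\<exists>vs es. length es \<ge> 1 \<and> length vs = length es + 1 \<and>
     (\<forall>i<length es. es ! i \<in> E \<and> ends (es ! i) = {vs ! i, vs ! (i+1)}) \<and>
     vs ! 0 = v \<and> vs ! (length es) = u \<and>
     (\<forall>i. i + 1 < length es \<longrightarrow> C (es ! i) \<noteq> C (es ! (i+1))) \<and>
     C (hd es) = (\<not> c0) \<and> c0 = (\<not> C (last es))"
    using path_walk[OF reach] neq by simp
  then obtain vs es where h: "length es \<ge> 1" "length vs = length es + 1"
      "\<forall>i<length es. es ! i \<in> E \<and> ends (es ! i) = {vs ! i, vs ! (i+1)}"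
      "vs ! 0 = v" "vs ! (length es) = u"
      "\<forall>i. i + 1 < length es \<longrightarrow> C (es ! i) \<noteq> C (es ! (i+1))"
      "C (hd es) = (\<not> c0)" "c0 = (\<not> C (last es))" by blast
  have ne: "es \<noteq> []" using h(1) by auto
  have hd0: "hd es = es ! 0" using ne by (simp add: hd_conv_nth)
  have P1: "\<forall>i<length (e0 # es). (e0 # es) ! i \<in> E \<and> ends ((e0 # es) ! i) = {(u # vs) ! i, (u # vs) ! (i + 1)}"
  proof (intro allI impI)
    fix i assume "i < length (e0 # es)"
    then show "(e0 # es) ! i \<in> E \<and> ends ((e0 # es) ! i) = {(u # vs) ! i, (u # vs) ! (i + 1)}"
      using h(3,4) uv e0 by (cases i) auto
  qed
  have P2: "\<forall>i. i + 1 < length (e0 # es) \<longrightarrow> C ((e0 # es) ! i) \<noteq> C ((e0 # es) ! (i + 1))"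
  proof (intro allI impI)
    fix i assume "i + 1 < length (e0 # es)"
    then show "C ((e0 # es) ! i) \<noteq> C ((e0 # es) ! (i + 1))"
      using h(6,7) hd0 c0_def by (cases i) auto
  qed
  have "is_CAW E ends C (u # vs) (e0 # es)"
    unfolding is_CAW_def using P1 P2 h ne c0_def by auto
  then show ?thesis by (metis list.set_intros(1))
qed



definition brel :: "'e set \<Rightarrow> ('e \<Rightarrow> 'v set) \<Rightarrow> ('v \<times> 'v) set" where
  "brel F ends = {(u,v). \<exists>e\<in>F. ends e = {u,v}}"

lemma components_alt: "components V F ends = V // Restr ((brel F ends)\<^sup>*) V"
  unfolding components_def brel_def by simp

lemma sym_brel: "sym (brel F ends)"
  unfolding brel_def sym_def by (auto simp: insert_commute)

lemma equiv_comp: "equiv V (Restr ((brel F ends)\<^sup>*) V)"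
proof -
  have s: "sym ((brel F ends)\<^sup>*)" by (rule sym_rtrancl[OF sym_brel])
  show ?thesis unfolding equiv_def
  proof (intro conjI)
    show "refl_on V (Restr ((brel F ends)\<^sup>*) V)" unfolding refl_on_def by auto
    show "sym (Restr ((brel F ends)\<^sup>*) V)" using s unfolding sym_def by auto
    show "trans (Restr ((brel F ends)\<^sup>*) V)" unfolding trans_def
      by (auto intro: rtrancl_trans)
  qed auto
qed

lemma comp_closed:
  assumes g: "graph V E ends" and FE: "F \<subseteq> E" and K: "K \<in> components V F ends"
    and a: "a \<in> K" and e: "e \<in> F" "a \<in> ends e" "b \<in> ends e"
  shows "b \<in> K"
proof -
  obtain k where k: "K = Restr ((brel F ends)\<^sup>*) V `` {k}" "k \<in> V"
    using K unfolding components_alt by (auto elim: quotientE)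
  have ka: "(k, a) \<in> (brel F ends)\<^sup>*" using a k by auto
  have bV: "b \<in> V" using g e FE unfolding graph_def by auto
  have "(a, b) \<in> (brel F ends)\<^sup>*"
  proof (cases "a = b")
    case True then show ?thesis by simp
  next
    case False
    have "card (ends e) = 2" using g e FE unfolding graph_def by auto
    then obtain p q where "ends e = {p,q}" "p \<noteq> q" by (auto simp: card_2_iff)
    then have "ends e = {a, b}" using e False by auto
    then have "(a, b) \<in> brel F ends" using e unfolding brel_def by auto
    then show ?thesis by auto
  qed
  then show ?thesis using ka k bV by (auto intro: rtrancl_trans)
qed

lemma comp_conn:
  assumes K: "K \<in> components V F ends" and a: "a \<in> K" and b: "b \<in> K"
  shows "(a, b) \<in> (brel F ends)\<^sup>*"
  using in_quotient_imp_in_rel[OF equiv_comp K[unfolded components_alt], of a b] a b by auto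

lemma comp_ex:
  assumes "v \<in> V" shows "\<exists>K\<in>components V F ends. v \<in> K"
  using assms quotientI[OF assms, of "Restr ((brel F ends)\<^sup>*) V"]
  unfolding components_alt by (intro bexI[of _ "Restr ((brel F ends)\<^sup>*) V `` {v}"]) auto

lemma comp_sub: "K \<in> components V F ends \<Longrightarrow> K \<subseteq> V"
  using in_quotient_imp_subset[OF equiv_comp] unfolding components_alt by blast

lemma comp_ne: "K \<in> components V F ends \<Longrightarrow> K \<noteq> {}"
  using in_quotient_imp_non_empty[OF equiv_comp] unfolding components_alt by blast

lemma comp_disj: "K \<in> components V F ends \<Longrightarrow> K' \<in> components V F ends \<Longrightarrow> K = K' \<or> K \<inter> K' = {}"
  using quotient_disj[OF equiv_comp] unfolding components_alt by blast

lemma comp_finite: "finite V \<Longrightarrow> finite (components V F ends)"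
  unfolding components_alt by (rule finite_quotient) auto

lemma abs_prop:
  assumes g: "graph V E ends" and FE: "F \<subseteq> E"
    and P: "\<And>e a b. e \<in> F \<Longrightarrow> ends e = {a,b} \<Longrightarrow> a \<noteq> b \<Longrightarrow> Y a = - (Y b :: real)"
    and r: "(a, b) \<in> (brel F ends)\<^sup>*"
  shows "\<bar>Y a\<bar> = \<bar>Y b\<bar>"
  using r
proof (induction rule: rtrancl_induct)
  case base then show ?case by simp
next
  case (step b c)
  then obtain e where e: "e \<in> F" "ends e = {b, c}" unfolding brel_def by auto
  have "card (ends e) = 2" using g e(1) FE unfolding graph_def by auto
  then have "b \<noteq> c" using e(2) by auto
  then have "Y b = - Y c" using P e by blast
  then show ?case using step by simp
qed



lemma coord_sum:
  fixes r :: "'v \<Rightarrow> real^'e"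
  assumes r: "r = (\<lambda>v. (\<chi> e. if e \<in> F \<and> v \<in> ends e then sg C e else 0))"
    and fS: "finite S"
  shows "(\<Sum>v\<in>S. y v *\<^sub>R r v) $ e = (if e \<in> F then sg C e * (\<Sum>v\<in>S \<inter> ends e. y v) else 0)"
proof -
  have "(\<Sum>v\<in>S. y v *\<^sub>R r v) $ e = (\<Sum>v\<in>S. y v * (if e \<in> F \<and> v \<in> ends e then sg C e else 0))"
    by (simp add: r)
  also have "\<dots> = (if e \<in> F then sg C e * (\<Sum>v\<in>S \<inter> ends e. y v) else 0)"
    by (auto simp: sum.inter_restrict[OF fS] sum_distrib_left intro!: sum.cong)
  finally show ?thesis .
qed



lemma rank_part:
  fixes C :: "'e::finite \<Rightarrow> bool" and r :: "'v \<Rightarrow> real^'e"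
  assumes g: "graph V E ends" and FE: "F \<subseteq> E"
    and r: "r = (\<lambda>v. (\<chi> e. if e \<in> F \<and> v \<in> ends e then sg C e else 0))"
  shows "dim (r ` V) + num_bip_components V F ends = card V"
proof -
  have finV: "finite V" using g unfolding graph_def by auto
  have c2: "\<And>e. e \<in> F \<Longrightarrow> card (ends e) = 2" and eV: "\<And>e. e \<in> F \<Longrightarrow> ends e \<subseteq> V"
    using g FE unfolding graph_def by auto
  have sgnz: "sg C e \<noteq> 0" for e unfolding sg_def by auto
  define comps where "comps = components V F ends"
  define Bip where "Bip = {K\<in>comps. bipartite_on K F ends}"
  define root where "root K = (SOME v. v \<in> K)" for K :: "'v set"
  have rootin: "root K \<in> K" if "K \<in> comps" for K
    using comp_ne[of K V F ends] that unfolding comps_def root_def by (auto intro: someI_ex)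
  define roots where "roots = root ` Bip"
  define V0 where "V0 = V - roots"
  have injroot: "inj_on root Bip"
  proof (rule inj_onI)
    fix K K' assume "K \<in> Bip" "K' \<in> Bip" "root K = root K'"
    then show "K = K'" using comp_disj[of K V F ends K'] rootin[of K] rootin[of K']
      unfolding Bip_def comps_def by auto
  qed
  have rootsV: "roots \<subseteq> V"
    using rootin comp_sub unfolding roots_def Bip_def comps_def by blast
  have cardV0: "card V0 = card V - card Bip"
    unfolding V0_def using card_Diff_subset[OF finite_subset[OF rootsV finV] rootsV]
      card_image[OF injroot] unfolding roots_def by simp
  have bipV: "card Bip \<le> card V"
    using card_mono[OF finV rootsV] card_image[OF injroot] unfolding roots_def by simp
  have finV0: "finite V0" using finV unfolding V0_def by auto
  have V0V: "V0 \<subseteq> V" unfolding V0_def by auto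
  have fam: "\<forall>v\<in>V0. y v = 0" if sy: "(\<Sum>v\<in>V0. y v *\<^sub>R r v) = 0" for y
  proof -
    define Y where "Y v = (if v \<in> V0 then y v else 0)" for v
    have P: "Y a = - Y b" if e: "e \<in> F" "ends e = {a,b}" "a \<noteq> b" for e a b
    proof -
      have "(\<Sum>v\<in>V0. y v *\<^sub>R r v) $ e = 0" using sy by simp
      then have "sg C e * (\<Sum>v\<in>V0 \<inter> ends e. y v) = 0"
        using coord_sum[OF r finV0, of y e] e by simp
      then have "(\<Sum>v\<in>V0 \<inter> ends e. y v) = 0" using sgnz by simp
      moreover have "(\<Sum>v\<in>V0 \<inter> ends e. y v) = (\<Sum>v\<in>ends e. Y v)"
        unfolding Y_def by (subst Int_commute, rule sum.inter_restrict) (use e in simp)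
      moreover have "(\<Sum>v\<in>ends e. Y v) = Y a + Y b" using e by simp
      ultimately show ?thesis by simp
    qed
    have Ab: "\<bar>Y a\<bar> = \<bar>Y b\<bar>" if "(a, b) \<in> (brel F ends)\<^sup>*" for a b
      using abs_prop[OF g FE _ that, of Y] P by metis
    show ?thesis
    proof
      fix v assume v: "v \<in> V0"
      then obtain K where K: "K \<in> comps" "v \<in> K" using comp_ex[of v V F ends] V0V
        unfolding comps_def by auto
      show "y v = 0"
      proof (cases "K \<in> Bip")
        case True
        have "root K \<in> roots" using True unfolding roots_def by auto
        then have "Y (root K) = 0" unfolding Y_def V0_def by auto
        moreover have "(root K, v) \<in> (brel F ends)\<^sup>*"
          using comp_conn[of K V F ends] K rootin unfolding comps_def by auto
        ultimately have "Y v = 0" using Ab[of "root K" v] by simp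
        then show ?thesis using v unfolding Y_def by simp
      next
        case False
        show ?thesis
        proof (rule ccontr)
          assume nz: "y v \<noteq> 0"
          have "bipartite_on K F ends" unfolding bipartite_on_def
          proof (intro exI[of _ "\<lambda>w. Y w > 0"] ballI impI allI)
            fix e a b assume e: "e \<in> F" "ends e \<subseteq> K" "ends e = {a, b}"
            have ab: "a \<noteq> b" using c2[OF e(1)] e(3) by auto
            have "a \<in> K" using e by auto
            then have "(v, a) \<in> (brel F ends)\<^sup>*"
              using comp_conn[of K V F ends] K unfolding comps_def by auto
            then have "\<bar>Y a\<bar> = \<bar>Y v\<bar>" using Ab[of v a] by simp
            moreover have "Y v \<noteq> 0" using nz v unfolding Y_def by simp
            moreover have "Y a = - Y b" using P[OF e(1) e(3) ab] .
            ultimately show "(Y a > 0) \<noteq> (Y b > 0)" by auto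
          qed
          then show False using False K unfolding Bip_def by auto
        qed
      qed
    qed
  qed
  have injr: "inj_on r V0"
  proof (rule inj_onI, rule ccontr)
    fix a b assume ab: "a \<in> V0" "b \<in> V0" "r a = r b" "a \<noteq> b"
    define y where "y v = (if v = a then 1 else if v = b then -1 else 0 :: real)" for v
    have "(\<Sum>v\<in>V0. y v *\<^sub>R r v) = (\<Sum>v\<in>V0. (if v = a then r a else 0) + (if v = b then - r b else 0))"
    proof (rule sum.cong[OF refl])
      fix v assume "v \<in> V0"
      show "y v *\<^sub>R r v = (if v = a then r a else 0) + (if v = b then - r b else 0)"
        unfolding y_def using ab(4) by (cases "v = a"; cases "v = b") auto
    qed
    also have "\<dots> = (\<Sum>v\<in>V0. (if v = a then r a else 0)) + (\<Sum>v\<in>V0. (if v = b then - r b else 0))"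
      by (rule sum.distrib)
    also have "\<dots> = r a + - r b" using ab(1,2) finV0 by (simp only: sum.delta if_True)
    also have "\<dots> = 0" using ab(3) by simp
    finally have "\<forall>v\<in>V0. y v = 0" using fam by blast
    then show False using ab(1) unfolding y_def by auto
  qed
  have indep: "independent (r ` V0)"
  proof
    assume "dependent (r ` V0)"
    then obtain u where u: "\<exists>w\<in>r ` V0. u w \<noteq> 0" "(\<Sum>w\<in>r ` V0. u w *\<^sub>R w) = 0"
    proof -
      have fr: "finite (r ` V0)" using finV0 by simp
      show ?thesis using that \<open>dependent (r ` V0)\<close> unfolding dependent_finite[OF fr] by blast
    qed
    have "(\<Sum>v\<in>V0. u (r v) *\<^sub>R r v) = 0"
      using u(2) sum.reindex[OF injr, of "\<lambda>w. u w *\<^sub>R w"] by simp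
    then have "\<forall>v\<in>V0. u (r v) = 0" by (rule fam)
    then show False using u(1) by auto
  qed
  have rootspan: "r (root K) \<in> span (r ` V0)" if KB: "K \<in> Bip" for K
  proof -
    have K: "K \<in> comps" and bip: "bipartite_on K F ends" using KB unfolding Bip_def by auto
    have "\<exists>f :: 'v \<Rightarrow> bool. \<forall>e\<in>F. ends e \<subseteq> K \<longrightarrow> (\<forall>u v. ends e = {u,v} \<longrightarrow> f u \<noteq> f v)"
      using bip unfolding bipartite_on_def .
    then obtain f :: "'v \<Rightarrow> bool" where f: "\<forall>e\<in>F. ends e \<subseteq> K \<longrightarrow> (\<forall>u v. ends e = {u,v} \<longrightarrow> f u \<noteq> f v)" ..
    let ?p = "root K"
    define s where "s w = (if f w = f ?p then 1 else -1 :: real)" for w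
    have KV: "K \<subseteq> V" using comp_sub[of K V F ends] K unfolding comps_def by blast
    have finK: "finite K" using finite_subset[OF KV finV] .
    have zero: "(\<Sum>w\<in>K. s w *\<^sub>R r w) = 0"
    proof (subst vec_eq_iff, rule allI)
      fix e
      show "(\<Sum>w\<in>K. s w *\<^sub>R r w) $ e = 0 $ e"
      proof (cases "e \<in> F")
        case False then show ?thesis using coord_sum[OF r finK, of s e] by simp
      next
        case True
        obtain a b where ab: "ends e = {a,b}" "a \<noteq> b" using c2[OF True] by (auto simp: card_2_iff)
        have "(\<Sum>w\<in>K \<inter> ends e. s w) = 0"
        proof (cases "a \<in> K")
          case aK: True
          then have bK: "b \<in> K" using comp_closed[OF g FE K[unfolded comps_def] aK True] ab by auto
          have "f a \<noteq> f b" using f True ab aK bK by auto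
          then have "s a + s b = 0" unfolding s_def by auto
          moreover have "K \<inter> ends e = {a, b}" using aK bK ab by auto
          ultimately show ?thesis using ab by simp
        next
          case aK: False
          have "b \<notin> K"
          proof
            assume "b \<in> K"
            then show False using comp_closed[OF g FE K[unfolded comps_def] _ True, of b a] ab aK by auto
          qed
          then have "K \<inter> ends e = {}" using aK ab by auto
          then show ?thesis by simp
        qed
        then show ?thesis using coord_sum[OF r finK, of s e] True by simp
      qed
    qed
    have pK: "?p \<in> K" using rootin K .
    have sp: "s ?p = 1" unfolding s_def by simp
    have "(\<Sum>w\<in>K. s w *\<^sub>R r w) = s ?p *\<^sub>R r ?p + (\<Sum>w\<in>K - {?p}. s w *\<^sub>R r w)"
      using sum.remove[OF finK pK] .
    then have "r ?p + (\<Sum>w\<in>K - {?p}. s w *\<^sub>R r w) = 0"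
      using zero sp by simp
    then have eq: "r ?p = - (\<Sum>w\<in>K - {?p}. s w *\<^sub>R r w)"
      by (simp only: eq_neg_iff_add_eq_0)
    have sub: "K - {?p} \<subseteq> V0"
    proof
      fix w assume w: "w \<in> K - {?p}"
      have "w \<notin> roots"
      proof
        assume "w \<in> roots"
        then obtain K' where K': "K' \<in> Bip" "w = root K'" unfolding roots_def by auto
        then have "w \<in> K'" using rootin unfolding Bip_def by auto
        then have "K' = K" using comp_disj[of K V F ends K'] K K' w unfolding Bip_def comps_def by auto
        then show False using K' w by auto
      qed
      then show "w \<in> V0" using w KV unfolding V0_def by auto
    qed
    have "(\<Sum>w\<in>K - {?p}. s w *\<^sub>R r w) \<in> span (r ` V0)"
    proof (rule span_sum)
      fix w assume "w \<in> K - {?p}"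
      then have "r w \<in> r ` V0" using sub by auto
      then show "s w *\<^sub>R r w \<in> span (r ` V0)" by (intro span_scale span_base)
    qed
    then have "- (\<Sum>w\<in>K - {?p}. s w *\<^sub>R r w) \<in> span (r ` V0)" by (rule span_neg)
    then show ?thesis using eq by simp
  qed
  have spanV: "r ` V \<subseteq> span (r ` V0)"
  proof
    fix w assume "w \<in> r ` V"
    then obtain v where v: "v \<in> V" "w = r v" by auto
    show "w \<in> span (r ` V0)"
    proof (cases "v \<in> roots")
      case True
      then obtain K where "K \<in> Bip" "v = root K" unfolding roots_def by auto
      then show ?thesis using rootspan v by auto
    next
      case False
      then have "v \<in> V0" using v unfolding V0_def by auto
      then show ?thesis using v by (auto intro: span_base)
    qed
  qed
  have "dim (r ` V) = card (r ` V0)"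
    by (rule dim_unique[OF _ spanV indep refl]) (use V0V in auto)
  also have "\<dots> = card V0" using card_image[OF injr] .
  finally show ?thesis
    using cardV0 bipV unfolding num_bip_components_def Bip_def comps_def by simp
qed



lemma cone_iff:
  assumes "finite E"
  shows "x \<in> alt_cone V E ends C \<longleftrightarrow> (\<forall>e\<in>E. x $ e \<ge> 0) \<and> (\<forall>e. e \<notin> E \<longrightarrow> x $ e = 0) \<and>
     (\<forall>v\<in>V. bal E ends C (\<lambda>e. x $ e) v = 0)"
  unfolding alt_cone_def using bal_split[OF assms, of ends C "\<lambda>e. x $ e"] by auto

lemma bal_lin:
  "bal E ends C (\<lambda>e. f e + t * g e) v = bal E ends C f v + t * bal E ends C g v"
  unfolding bal_def by (simp add: algebra_simps sum.distrib sum_distrib_left)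

lemma bal_sum:
  "bal E ends C (\<lambda>e. \<Sum>i\<in>S. f i e) v = (\<Sum>i\<in>S. bal E ends C (f i) v)"
  unfolding bal_def by (simp add: sum_distrib_left sum.swap[of _ S])

lemma cone_sum:
  assumes fE: "finite E" and fS: "finite S" and h: "\<forall>i\<in>S. f i \<in> alt_cone V E ends C"
  shows "(\<Sum>i\<in>S. f i) \<in> alt_cone V E ends C"
proof -
  have h': "\<forall>i\<in>S. (\<forall>e\<in>E. f i $ e \<ge> 0) \<and> (\<forall>e. e \<notin> E \<longrightarrow> f i $ e = 0) \<and>
     (\<forall>v\<in>V. bal E ends C (\<lambda>e. f i $ e) v = 0)" using h cone_iff[OF fE] by blast
  show ?thesis unfolding cone_iff[OF fE]
  proof (intro conjI ballI allI impI)
    fix e assume "e \<in> E" then show "(\<Sum>i\<in>S. f i) $ e \<ge> 0" using h' by (simp add: sum_nonneg)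
  next
    fix e assume "e \<notin> E" then show "(\<Sum>i\<in>S. f i) $ e = 0" using h' by simp
  next
    fix v assume "v \<in> V"
    then show "bal E ends C (\<lambda>e. (\<Sum>i\<in>S. f i) $ e) v = 0"
      using h' bal_sum[of E ends C "\<lambda>i e. f i $ e" S v] by simp
  qed
qed



theorem theorem2p6:
  fixes V :: "'v set" and E :: "'e::finite set" and ends :: "'e \<Rightarrow> 'v set"
    and C :: "'e \<Rightarrow> bool" and d :: "'v \<Rightarrow> nat"
  assumes "graph V E ends"
    and "\<forall>v\<in>V. d v = red_degree E ends C v"
  shows "int (dim (alt_cone V E ends C)) =
           int (card (E_d V E ends d)) - int (card V) + int (num_bip_components V (E_d V E ends d) ends)"
proof -
  note g = assms(1) and dC = assms(2)
  define F where "F = E_d V E ends d"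
  define cone where "cone = alt_cone V E ends C"
  have finE: "finite E" and finV: "finite V" using g unfolding graph_def by auto
  have FE: "F \<subseteq> E" unfolding F_def E_d_def by auto
  note ci = cone_iff[OF finE, of _ V ends C]
  have F2: "\<exists>a\<in>cone. a $ e > 0" if e: "e \<in> F" for e
  proof -
    obtain C' vs es where C': "\<forall>v\<in>V. red_degree E ends C' v = d v" and w: "is_CAW E ends C' vs es"
      and ees: "e \<in> set es"
      using e unfolding F_def E_d_def by blast
    define x where "x = (\<lambda>e. \<Sum>i<length es. if es ! i = e then 1 else 0 :: real)"
    have xp: "(\<forall>e. x e \<ge> 0) \<and> (\<forall>e. e \<notin> E \<longrightarrow> x e = 0) \<and> (\<forall>v. bal E ends C' x v = 0)
     \<and> (\<forall>e\<in>set es. x e > 0)"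
      unfolding x_def by (rule caw_vec[OF g w])
    have deg: "\<forall>v\<in>V. red_degree E ends C' v = red_degree E ends C v" using C' dC by simp
    obtain a where a: "(\<forall>e. a e \<ge> 0)" "(\<forall>e. e \<notin> E \<longrightarrow> a e = 0)" "(\<forall>v\<in>V. bal E ends C a v = 0)" "a e > 0"
      using transfer_cone[OF finE deg, of x e] xp ees by blast
    have eta: "(\<lambda>e. (\<chi> i. a i) $ e) = a" by (simp add: fun_eq_iff)
    have "(\<chi> i. a i) \<in> cone" unfolding cone_def ci eta using a by simp
    then show ?thesis using a(4) by (intro bexI[of _ "\<chi> i. a i"]) auto
  qed
  have F3: "e \<in> F" if a: "a \<in> cone" "a $ e \<noteq> 0" for a e
  proof -
    have ac: "(\<forall>e\<in>E. a $ e \<ge> 0)" "(\<forall>e. e \<notin> E \<longrightarrow> a $ e = 0)" "(\<forall>v\<in>V. bal E ends C (\<lambda>e. a $ e) v = 0)"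
      using a(1) unfolding cone_def ci by auto
    have eE: "e \<in> E" using ac(2) a(2) by auto
    have pos: "a $ e > 0" using ac(1) eE a(2) by force
    have xpos: "\<forall>e. (\<lambda>e. a $ e) e \<ge> 0" using ac(1,2) by (metis order_refl)
    obtain vs es where "is_CAW E ends C vs es" "e \<in> set es"
      using circulation_caw[OF g xpos ac(3) eE] pos by auto
    moreover have "\<forall>v\<in>V. red_degree E ends C v = d v" using dC by simp
    ultimately show ?thesis unfolding F_def E_d_def using eE by blast
  qed
  define B where "B = {x :: real^'e. \<forall>i. i \<notin> F \<longrightarrow> x $ i = 0}"
  have subB: "subspace B" unfolding B_def subspace_def by auto
  define r where "r = (\<lambda>v. (\<chi> e. if e \<in> F \<and> v \<in> ends e then sg C e else 0) :: real^'e)"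
  define R where "R = span (r ` V)"
  have rB: "r ` V \<subseteq> B" unfolding B_def r_def by auto
  have RB: "R \<subseteq> B" unfolding R_def by (rule span_minimal[OF rB subB])
  have inner_r: "r v \<bullet> y = bal E ends C (\<lambda>e. y $ e) v" if y: "y \<in> B" for v y
  proof -
    have "r v \<bullet> y = (\<Sum>e\<in>UNIV. (if e \<in> F \<and> v \<in> ends e then sg C e else 0) * y $ e)"
      unfolding inner_vec_def r_def by simp
    also have "\<dots> = (\<Sum>e\<in>UNIV. if e \<in> {e\<in>E. v \<in> ends e} then sg C e * y $ e else 0)"
      using y FE unfolding B_def by (intro sum.cong) auto
    also have "\<dots> = (\<Sum>e\<in>UNIV \<inter> {e\<in>E. v \<in> ends e}. sg C e * y $ e)"
      by (rule sum.inter_restrict[symmetric]) simp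
    finally show ?thesis unfolding bal_def by simp
  qed
  define L where "L = {y \<in> B. \<forall>x \<in> R. orthogonal x y}"
  have Lchar: "y \<in> L \<longleftrightarrow> y \<in> B \<and> (\<forall>v\<in>V. bal E ends C (\<lambda>e. y $ e) v = 0)" for y
  proof
    assume "y \<in> L"
    then have yB: "y \<in> B" and o: "\<forall>x \<in> R. orthogonal x y" unfolding L_def by auto
    have "\<forall>v\<in>V. r v \<bullet> y = 0" using o unfolding R_def orthogonal_def by (auto intro: span_base)
    then show "y \<in> B \<and> (\<forall>v\<in>V. bal E ends C (\<lambda>e. y $ e) v = 0)" using inner_r[OF yB] yB by simp
  next
    assume h: "y \<in> B \<and> (\<forall>v\<in>V. bal E ends C (\<lambda>e. y $ e) v = 0)"
    have "orthogonal x y" if x: "x \<in> R" for x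
    proof -
      have "orthogonal y x"
        by (rule orthogonal_to_span[of x "r ` V" y]) (use x h inner_r in \<open>auto simp: R_def orthogonal_def inner_commute\<close>)
      then show ?thesis by (simp add: orthogonal_commute)
    qed
    then show "y \<in> L" using h unfolding L_def by auto
  qed
  have subL: "subspace L"
  proof -
    have "L = B \<inter> {y. \<forall>x \<in> R. orthogonal x y}" unfolding L_def by auto
    then show ?thesis using subspace_inter[OF subB subspace_orthogonal_to_vectors] by simp
  qed
  have coneL: "cone \<subseteq> L"
  proof
    fix x assume x: "x \<in> cone"
    have "x \<in> B" unfolding B_def using F3[OF x] by auto
    moreover have "\<forall>v\<in>V. bal E ends C (\<lambda>e. x $ e) v = 0" using x unfolding cone_def ci by auto
    ultimately show "x \<in> L" using Lchar by auto
  qed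
  obtain pa where pa: "\<forall>e\<in>F. pa e \<in> cone \<and> pa e $ e > 0" using F2 by metis
  define p where "p = (\<Sum>e\<in>F. pa e)"
  have finF: "finite F" using finite_subset[OF FE finE] .
  have pc: "p \<in> cone" unfolding p_def cone_def by (rule cone_sum[OF finE finF]) (use pa cone_def in auto)
  have pac: "\<forall>e\<in>F. \<forall>i\<in>E. pa e $ i \<ge> 0" using pa unfolding cone_def ci by auto
  have pnn: "\<forall>i\<in>E. p $ i \<ge> 0" and p0: "\<forall>i. i \<notin> E \<longrightarrow> p $ i = 0"
    and pbal: "\<forall>v\<in>V. bal E ends C (\<lambda>e. p $ e) v = 0"
    using pc unfolding cone_def ci by auto
  have ppos: "p $ e > 0" if e: "e \<in> F" for e
  proof -
    have "pa e $ e \<le> (\<Sum>e'\<in>F. pa e' $ e)"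
      by (rule member_le_sum) (use e finF pac FE in auto)
    then show ?thesis using pa e unfolding p_def by auto
  qed
  have Lcone: "L \<subseteq> span cone"
  proof
    fix y assume yL: "y \<in> L"
    then have yB: "y \<in> B" and ybal: "\<forall>v\<in>V. bal E ends C (\<lambda>e. y $ e) v = 0" using Lchar by auto
    define t where "t = (\<Sum>e\<in>F. \<bar>y $ e\<bar> / p $ e)"
    have tnn: "t \<ge> 0" unfolding t_def using ppos by (intro sum_nonneg) (auto intro!: divide_nonneg_pos)
    have tge: "t * p $ e \<ge> \<bar>y $ e\<bar>" if e: "e \<in> F" for e
    proof -
      have "\<bar>y $ e\<bar> / p $ e \<le> t" unfolding t_def
        by (rule member_le_sum) (use e finF ppos in \<open>auto intro: divide_nonneg_pos\<close>)
      then show ?thesis using ppos[OF e] by (simp add: divide_le_eq)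
    qed
    define z where "z = y + t *\<^sub>R p"
    have "z \<in> cone" unfolding cone_def ci
    proof (intro conjI ballI allI impI)
      fix e assume eE: "e \<in> E"
      show "z $ e \<ge> 0"
      proof (cases "e \<in> F")
        case True then show ?thesis using tge[OF True] unfolding z_def by simp
      next
        case False then have "y $ e = 0" using yB unfolding B_def by auto
        then show ?thesis using tnn pnn eE unfolding z_def by simp
      qed
    next
      fix e assume "e \<notin> E"
      then show "z $ e = 0" using yB p0 FE unfolding z_def B_def by auto
    next
      fix v assume v: "v \<in> V"
      have "bal E ends C (\<lambda>e. z $ e) v = bal E ends C (\<lambda>e. y $ e) v + t * bal E ends C (\<lambda>e. p $ e) v"
        unfolding z_def using bal_lin[of E ends C "\<lambda>e. y $ e" t "\<lambda>e. p $ e" v] by simp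
      then show "bal E ends C (\<lambda>e. z $ e) v = 0" using ybal pbal v by simp
    qed
    then have "z - t *\<^sub>R p \<in> span cone"
      using pc by (intro span_diff span_scale span_base)
    then show "y \<in> span cone" unfolding z_def by simp
  qed
  have spanL: "span cone = L"
    using span_minimal[OF coneL subL] Lcone by auto
  have dimL: "dim cone = dim L" using spanL dim_span by metis
  have "dim L + dim R = dim B"
    unfolding L_def by (rule dim_subspace_orthogonal_to_vectors[OF _ subB RB]) (simp add: R_def)
  moreover have "dim B = card F"
  proof -
    have "vec.dim {x::real^'e. \<forall>i. i \<notin> F \<longrightarrow> x $ i = 0} = card F" by (rule dim_substandard_cart)
    then show ?thesis unfolding B_def by (simp add: dim_vec_eq)
  qed
  moreover have "dim R + num_bip_components V F ends = card V"
    unfolding R_def dim_span by (rule rank_part[OF g FE r_def])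
  ultimately show ?thesis
    using dimL unfolding F_def[symmetric] cone_def[symmetric] by linarith
qed


end
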